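(* In the setting described in the context, every feasible solution of RLO-CCU-SD satisfies $\Gamma\in\Theta$ and $\Gamma_{\hat{i}}=\underline{\Gamma}_{\hat{i}}$ for some $\hat{i}\in\hat{I}$. Conversely, if $\sum_{j\in J}a_{ij}\hat{x}_j\ge b_i$ for all $i\in I$, then for every $\Gamma\in\Theta$ satisfying $\Gamma_{\hat{i}}=\underline{\Gamma}_{\hat{i}}$ for some $\hat{i}\in\hat{I}$ there exists $(c,u,y,z,\pi,\varphi,\lambda,\mu)$ such that $(\Gamma,c,u,y,z,\pi,\varphi,\lambda,\mu)$ is feasible for RLO-CCU-SD.
   Context: Let $I=\{1,\dots,m\}$, $J=\{1,\dots,n\}$. Given are $a_{ij}\in\mathbb{R}$, $b\in\mathbb{R}^m$, index sets $J_i\subseteq J$, nonnegative numbers $\alpha_{ij}$ ($j\in J_i,i\in I$), an observed point $\hat{x}\in\mathbb{R}^n$, a prior $\hat{\Gamma}\in\mathbb{R}^m$ and a norm $\|\cdot\|$ on $\mathbb{R}^m$. For $i\in I$ and $x\in\mathbb{R}^n$ let $j^i_1(x),\dots,j^i_{|J_i|}(x)$ order $J_i$ so that $\alpha_{ij^i_k(x)}|x_{j^i_k(x)}|$ is the $k$-th largest element of $\{\alpha_{ij}|x_j|\}_{j\in J_i}$, and for $\Gamma_i\in[0,|J_i|]$ let $P_i(\Gamma_i,x)=\sum_{k=1}^{\lfloor\Gamma_i\rfloor}\alpha_{ij^i_k(x)}|x_{j^i_k(x)}|+(\Gamma_i-\lfloor\Gamma_i\rfloor)\alpha_{ij^i_{\lceil\Gamma_i\rceil}(x)}|x_{j^i_{\lceil\Gamma_i\rceil}(x)}|$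 (last term $0$ for integer $\Gamma_i$). Let $s_i=\sum_{j\in J}a_{ij}\hat{x}_j-b_i$, $\hat{I}=\{i\in I:0\le s_i\le\sum_{j\in J_i}\alpha_{ij}|\hat{x}_j|\}$, and for $i\in\hat{I}$ let $\underline{\Gamma}_i=\min\{\sum_{j\in J_i}w_j:\sum_{j\in J_i}\alpha_{ij}|\hat{x}_j|w_j=s_i,\ 0\le w_j\le1\}$, so $s_i=P_i(\underline{\Gamma}_i,\hat{x})$. Standing assumption: for each $i\in\hat{I}$, $\underline{\Gamma}_i$ is the unique $\Gamma_i\in[0,|J_i|]$ with $s_i=P_i(\Gamma_i,\hat{x})$. Let $\Theta=\{\Gamma\in\mathbb{R}^m:\Gamma_i\in[0,\underline{\Gamma}_i]\ \forall i\in\hat{I};\ \Gamma_i\in[0,|J_i|]\ \forall i\in I\setminus\hat{I}\}$. The problem RLO-CCU-SD is \[ \min_{\Gamma,c,u,y,z,\pi,\varphi,\lambda,\mu}\ \|\Gamma-\hat{\Gamma}\| \] subject to: $\sum_{j\in J}c_j\hat{x}_j-\sum_{i\in I}b_i\pi_i=0$; $\alpha_{ij}\hat{x}_j+u_{ij}\ge0$ and $-\alpha_{ij}\hat{x}_j+u_{ij}\ge0$ ($j\in J_i,i\in I$); $y_{ij}+z_i\ge u_{ij}$ ($j\in J_i,i\in I$); $\sum_{j\in J}a_{ij}\hat{x}_j-\sum_{j\in J_i}y_{ij}-\Gamma_iz_i\ge b_i$ ($i\in I$); $y_{ij},z_i\ge0$; $0\le\Gamma_i\le|J_i|$ ($i\in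 I$); $\sum_{i\in I}\pi_i=1$; $\sum_{i\in I}a_{ij}\pi_i+\sum_{i\in I:j\in J_i}\alpha_{ij}(\lambda_{ij}-\mu_{ij})=c_j$ ($j\in J$); $\varphi_{ij}\le\pi_i$ and $\varphi_{ij}=\lambda_{ij}+\mu_{ij}$ ($j\in J_i,i\in I$); $\sum_{j\in J_i}\varphi_{ij}\le\Gamma_i\pi_i$ ($i\in I$); $\pi_i,\varphi_{ij},\lambda_{ij},\mu_{ij}\ge0$ ($j\in J_i,i\in I$). *)

theory Defs
  imports Complex_Main
begin

text \<open>Index sets: I = {1..m}, J = {1..n}. Data: a :: nat => nat => real (a i j),
  b :: nat => real, Js :: nat => nat set (J_i), al :: nat => nat => real (alpha_ij),
  xh :: nat => real (observed point).\<close>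

text \<open>P_i(Gamma_i, x): the values al_ij |x_j| (j in J_i) sorted in nonincreasing order
  v_1 >= v_2 >= ... ; P = v_1 + ... + v_floor(G) + (G - floor G) * v_ceil(G)
  (last term 0 for integer G). Lists are 0-indexed, so v_k is v ! (k-1).\<close>
definition Pval :: "(nat \<Rightarrow> real) \<Rightarrow> nat set \<Rightarrow> real \<Rightarrow> (nat \<Rightarrow> real) \<Rightarrow> real" where
  "Pval al Ji g x =
     (let v = rev (sort (map (\<lambda>j. al j * \<bar>x j\<bar>) (sorted_list_of_set Ji))) in
      (\<Sum>k<nat \<lfloor>g\<rfloor>. v ! k)
      + (if g = of_int \<lfloor>g\<rfloor> then 0 else (g - of_int \<lfloor>g\<rfloor>) * v ! (nat \<lceil>g\<rceil> - 1)))"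

definition slack :: "nat \<Rightarrow> (nat \<Rightarrow> nat \<Rightarrow> real) \<Rightarrow> (nat \<Rightarrow> real) \<Rightarrow> (nat \<Rightarrow> real) \<Rightarrow> nat \<Rightarrow> real" where
  "slack n a b xh i = (\<Sum>j\<in>{1..n}. a i j * xh j) - b i"

definition Ihat :: "nat \<Rightarrow> nat \<Rightarrow> (nat \<Rightarrow> nat \<Rightarrow> real) \<Rightarrow> (nat \<Rightarrow> real) \<Rightarrow> (nat \<Rightarrow> nat set)
    \<Rightarrow> (nat \<Rightarrow> nat \<Rightarrow> real) \<Rightarrow> (nat \<Rightarrow> real) \<Rightarrow> nat set" where
  "Ihat m n a b Js al xh = {i \<in> {1..m}. 0 \<le> slack n a b xh i \<and>
       slack n a b xh i \<le> (\<Sum>j\<in>Js i. al i j * \<bar>xh j\<bar>)}"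

definition Gamma_low :: "nat \<Rightarrow> (nat \<Rightarrow> nat \<Rightarrow> real) \<Rightarrow> (nat \<Rightarrow> real) \<Rightarrow> (nat \<Rightarrow> nat set)
    \<Rightarrow> (nat \<Rightarrow> nat \<Rightarrow> real) \<Rightarrow> (nat \<Rightarrow> real) \<Rightarrow> nat \<Rightarrow> real" where
  "Gamma_low n a b Js al xh i =
     Inf {(\<Sum>j\<in>Js i. w j) | w.
            (\<Sum>j\<in>Js i. al i j * \<bar>xh j\<bar> * w j) = slack n a b xh i \<and>
            (\<forall>j\<in>Js i. 0 \<le> w j \<and> w j \<le> 1)}"

definition in_Theta :: "nat \<Rightarrow> nat \<Rightarrow> (nat \<Rightarrow> nat \<Rightarrow> real) \<Rightarrow> (nat \<Rightarrow> real) \<Rightarrow> (nat \<Rightarrow> nat set)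
    \<Rightarrow> (nat \<Rightarrow> nat \<Rightarrow> real) \<Rightarrow> (nat \<Rightarrow> real) \<Rightarrow> (nat \<Rightarrow> real) \<Rightarrow> bool" where
  "in_Theta m n a b Js al xh G \<longleftrightarrow>
     (\<forall>i\<in>{1..m}. 0 \<le> G i \<and> G i \<le> real (card (Js i)) \<and>
        (i \<in> Ihat m n a b Js al xh \<longrightarrow> G i \<le> Gamma_low n a b Js al xh i))"

text \<open>Feasibility for RLO-CCU-SD (the objective norm is irrelevant for feasibility).\<close>
definition feasible :: "nat \<Rightarrow> nat \<Rightarrow> (nat \<Rightarrow> nat \<Rightarrow> real) \<Rightarrow> (nat \<Rightarrow> real) \<Rightarrow> (nat \<Rightarrow> nat set)
    \<Rightarrow> (nat \<Rightarrow> nat \<Rightarrow> real) \<Rightarrow> (nat \<Rightarrow> real)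
    \<Rightarrow> (nat \<Rightarrow> real) \<Rightarrow> (nat \<Rightarrow> real) \<Rightarrow> (nat \<Rightarrow> nat \<Rightarrow> real) \<Rightarrow> (nat \<Rightarrow> nat \<Rightarrow> real)
    \<Rightarrow> (nat \<Rightarrow> real) \<Rightarrow> (nat \<Rightarrow> real) \<Rightarrow> (nat \<Rightarrow> nat \<Rightarrow> real) \<Rightarrow> (nat \<Rightarrow> nat \<Rightarrow> real)
    \<Rightarrow> (nat \<Rightarrow> nat \<Rightarrow> real) \<Rightarrow> bool" where
  "feasible m n a b Js al xh G c u y z p phi lam mu \<longleftrightarrow>
     (\<Sum>j\<in>{1..n}. c j * xh j) - (\<Sum>i\<in>{1..m}. b i * p i) = 0
   \<and> (\<forall>i\<in>{1..m}. \<forall>j\<in>Js i. al i j * xh j + u i j \<ge> 0 \<and> - al i j * xh j + u i j \<ge> 0)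
   \<and> (\<forall>i\<in>{1..m}. \<forall>j\<in>Js i. y i j + z i \<ge> u i j)
   \<and> (\<forall>i\<in>{1..m}. (\<Sum>j\<in>{1..n}. a i j * xh j) - (\<Sum>j\<in>Js i. y i j) - G i * z i \<ge> b i)
   \<and> (\<forall>i\<in>{1..m}. \<forall>j\<in>Js i. y i j \<ge> 0)
   \<and> (\<forall>i\<in>{1..m}. z i \<ge> 0)
   \<and> (\<forall>i\<in>{1..m}. 0 \<le> G i \<and> G i \<le> real (card (Js i)))
   \<and> (\<Sum>i\<in>{1..m}. p i) = 1
   \<and> (\<forall>j\<in>{1..n}. (\<Sum>i\<in>{1..m}. a i j * p i)
          + (\<Sum>i\<in>{i\<in>{1..m}. j \<in> Js i}. al i j * (lam i j - mu i j)) = c j)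
   \<and> (\<forall>i\<in>{1..m}. \<forall>j\<in>Js i. phi i j \<le> p i \<and> phi i j = lam i j + mu i j)
   \<and> (\<forall>i\<in>{1..m}. (\<Sum>j\<in>Js i. phi i j) \<le> G i * p i)
   \<and> (\<forall>i\<in>{1..m}. p i \<ge> 0)
   \<and> (\<forall>i\<in>{1..m}. \<forall>j\<in>Js i. phi i j \<ge> 0 \<and> lam i j \<ge> 0 \<and> mu i j \<ge> 0)"

end

theory Submission
  imports Defs "HOL-Library.Multiset"
begin


definition clampw :: "real \<Rightarrow> nat \<Rightarrow> real" where
  "clampw g k = min 1 (max 0 (g - real k))"

definition vlist :: "(nat \<Rightarrow> real) \<Rightarrow> nat set \<Rightarrow> real list" where
  "vlist w J = rev (sort (map w (sorted_list_of_set J)))"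

definition Qf :: "(nat \<Rightarrow> real) \<Rightarrow> nat set \<Rightarrow> real \<Rightarrow> real" where
  "Qf w J g = (\<Sum>k<card J. vlist w J ! k * clampw g k)"

lemma length_vlist[simp]: "length (vlist w J) = card J"
  by (simp add: vlist_def)

lemma vlist_js: "\<exists>js. distinct js \<and> set js = J \<and> vlist w J = map w js" if "finite J"
proof -
  let ?L = "sorted_list_of_set J"
  have "sort (map w ?L) = map w (sort_key w ?L)"
    by (rule properties_for_sort) (simp_all add: mset_map)
  then show ?thesis using that
    by (intro exI[of _ "rev (sort_key w ?L)"]) (simp add: vlist_def rev_map)
qed

lemma vlist_mono: "i \<le> k \<Longrightarrow> k < card J \<Longrightarrow> vlist w J ! k \<le> vlist w J ! i"
proof -
  assume a: "i \<le> k" "k < card J"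
  let ?s = "sort (map w (sorted_list_of_set J))"
  have l: "length ?s = card J" by simp
  have "?s ! (card J - Suc k) \<le> ?s ! (card J - Suc i)"
    by (rule sorted_nth_mono) (use a in auto)
  then show ?thesis using a l by (simp add: vlist_def rev_nth)
qed

lemma vlist_nonneg: "finite J \<Longrightarrow> \<forall>j\<in>J. w j \<ge> 0 \<Longrightarrow> k < card J \<Longrightarrow> vlist w J ! k \<ge> 0"
proof -
  assume a: "finite J" "\<forall>j\<in>J. w j \<ge> 0" "k < card J"
  obtain js where js: "distinct js" "set js = J" "vlist w J = map w js" using vlist_js[OF a(1)] by blast
  have "length js = card J" using js length_vlist[of w J] by simp
  then have "js ! k \<in> J" using js a by auto
  then show ?thesis using js a \<open>length js = card J\<close> by simp
qed

lemma sum_J_nth: "distinct js \<Longrightarrow> set js = J \<Longrightarrow> (\<Sum>j\<in>J. f j) = (\<Sum>k<length js. f (js ! k))"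
  by (metis bij_betw_nth sum.reindex_bij_betw)

lemma clampw_sum: "g \<ge> 0 \<Longrightarrow> (\<Sum>k<N. clampw g k) = min g (real N)"
  by (induction N) (auto simp: clampw_def)

lemma Pval_Qf:
  assumes "finite J" "0 \<le> g" "g \<le> real (card J)"
  shows "Pval al J g x = Qf (\<lambda>j. al j * \<bar>x j\<bar>) J g"
proof -
  let ?w = "\<lambda>j. al j * \<bar>x j\<bar>"
  let ?v = "vlist ?w J"
  define K where "K = nat \<lfloor>g\<rfloor>"
  have KK: "real K \<le> g" "g < real K + 1" using assms(2) unfolding K_def by linarith+
  have P: "Pval al J g x = (\<Sum>k<K. ?v ! k) + (if g = of_int \<lfloor>g\<rfloor> then 0 else (g - of_int \<lfloor>g\<rfloor>) * ?v ! (nat \<lceil>g\<rceil> - 1))"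
    unfolding Pval_def vlist_def K_def Let_def by simp
  show ?thesis
  proof (cases "g = of_int \<lfloor>g\<rfloor>")
    case True
    then have gK: "g = real K" using assms(2) unfolding K_def by simp
    then have KN: "K \<le> card J" using assms by simp
    have "Qf ?w J g = (\<Sum>k<card J. if k < K then ?v ! k else 0)"
      unfolding Qf_def by (rule sum.cong) (auto simp: clampw_def gK)
    also have "\<dots> = (\<Sum>k<K. ?v ! k)"
    proof -
      have "{..<card J} \<inter> {k. k < K} = {..<K}" using KN by auto
      then show ?thesis by (simp add: sum.If_cases)
    qed
    finally show ?thesis using P True by simp
  next
    case False
    have rK: "real K = of_int \<lfloor>g\<rfloor>" using assms(2) unfolding K_def by simp
    then have "real K < g" using KK False by (metis order_le_less)
    then have KN: "K < card J" using assms by linarith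
    have "\<lceil>g\<rceil> = \<lfloor>g\<rfloor> + 1" using False by (simp add: ceiling_altdef)
    then have ce: "nat \<lceil>g\<rceil> - 1 = K" using assms(2) unfolding K_def by simp
    have "Qf ?w J g = (\<Sum>k<card J. if k < K then ?v ! k else if k = K then (g - real K) * ?v ! K else 0)"
      unfolding Qf_def by (rule sum.cong) (use KK in \<open>auto simp: clampw_def\<close>)
    also have "\<dots> = (\<Sum>k<K. ?v ! k) + (g - real K) * ?v ! K"
    proof -
      define F where "F = (\<lambda>k. if k < K then ?v ! k else if k = K then (g - real K) * ?v ! K else 0)"
      have e: "{..<card J} = insert K ({..<K} \<union> {Suc K..<card J})" using KN by auto
      have "sum F {..<card J} = F K + sum F ({..<K} \<union> {Suc K..<card J})"
        unfolding e by (subst sum.insert) auto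
      also have "\<dots> = F K + sum F {..<K} + sum F {Suc K..<card J}"
        by (subst sum.union_disjoint) auto
      also have "sum F {..<K} = (\<Sum>k<K. ?v ! k)" unfolding F_def by (rule sum.cong) auto
      also have "sum F {Suc K..<card J} = 0" unfolding F_def by (rule sum.neutral) auto
      finally show ?thesis unfolding F_def by simp
    qed
    finally show ?thesis using P False ce KK unfolding K_def by simp
  qed
qed

lemma clampw_mono: "g \<le> g' \<Longrightarrow> clampw g k \<le> clampw g' k"
  by (auto simp: clampw_def)

lemma clampw_bounds: "0 \<le> clampw g k" "clampw g k \<le> 1"
  by (auto simp: clampw_def)

lemma Qf_mono:
  assumes "finite J" "\<forall>j\<in>J. w j \<ge> 0" "g \<le> g'"
  shows "Qf w J g \<le> Qf w J g'"
  unfolding Qf_def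
  by (rule sum_mono) (use assms vlist_nonneg clampw_mono in \<open>auto intro!: mult_left_mono\<close>)

lemma Qf_cont: "continuous_on S (Qf w J)"
  unfolding Qf_def clampw_def by (intro continuous_intros)

lemma Qf_0: "Qf w J 0 = 0"
  unfolding Qf_def clampw_def by simp

lemma Qf_N:
  assumes "finite J"
  shows "Qf w J (real (card J)) = (\<Sum>j\<in>J. w j)"
proof -
  obtain js where js: "distinct js" "set js = J" "vlist w J = map w js" using vlist_js[OF assms] by blast
  have l: "length js = card J" using js length_vlist[of w J] by simp
  have "Qf w J (real (card J)) = (\<Sum>k<card J. vlist w J ! k)"
    unfolding Qf_def by (rule sum.cong) (auto simp: clampw_def)
  also have "\<dots> = (\<Sum>k<length js. w (js ! k))" using js l by simp
  also have "\<dots> = (\<Sum>j\<in>J. w j)" by (rule sum_J_nth[OF js(1,2), symmetric])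
  finally show ?thesis .
qed

lemma dual_exists:
  assumes "finite J" "0 \<le> g"
  shows "\<exists>phi. (\<forall>j\<in>J. 0 \<le> phi j \<and> phi j \<le> 1) \<and> (\<Sum>j\<in>J. phi j) \<le> g
              \<and> (\<Sum>j\<in>J. w j * phi j) = Qf w J g"
proof -
  obtain js where js: "distinct js" "set js = J" "vlist w J = map w js" using vlist_js[OF assms(1)] by blast
  have l: "length js = card J" using js length_vlist[of w J] by simp
  have inj: "inj_on ((!) js) {..<length js}" using js(1) by (simp add: inj_on_nth)
  define phi where "phi = (\<lambda>j. clampw g (the_inv_into {..<length js} ((!) js) j))"
  have pk: "phi (js ! k) = clampw g k" if "k < length js" for k
    unfolding phi_def using the_inv_into_f_f[OF inj] that by simp
  have "(\<Sum>j\<in>J. phi j) = (\<Sum>k<length js. phi (js ! k))" by (rule sum_J_nth[OF js(1,2)])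
  also have "\<dots> = (\<Sum>k<length js. clampw g k)" by (rule sum.cong) (auto simp: pk)
  also have "\<dots> \<le> g" using clampw_sum[OF assms(2)] by simp
  finally have s1: "(\<Sum>j\<in>J. phi j) \<le> g" .
  have "(\<Sum>j\<in>J. w j * phi j) = (\<Sum>k<length js. w (js ! k) * phi (js ! k))" by (rule sum_J_nth[OF js(1,2)])
  also have "\<dots> = (\<Sum>k<card J. vlist w J ! k * clampw g k)" using l js(3) by (intro sum.cong) (auto simp: pk)
  finally have s2: "(\<Sum>j\<in>J. w j * phi j) = Qf w J g" unfolding Qf_def .
  have "\<forall>j\<in>J. 0 \<le> phi j \<and> phi j \<le> 1" unfolding phi_def using clampw_bounds by auto
  with s1 s2 show ?thesis by blast
qed

lemma primal_exists:
  assumes "finite J" "\<forall>j\<in>J. w j \<ge> 0" "0 \<le> g" "g \<le> real (card J)"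
  shows "\<exists>y z. 0 \<le> z \<and> (\<forall>j\<in>J. 0 \<le> y j \<and> w j \<le> y j + z)
              \<and> (\<Sum>j\<in>J. y j) + g * z \<le> Qf w J g"
proof -
  obtain js where js: "distinct js" "set js = J" "vlist w J = map w js" using vlist_js[OF assms(1)] by blast
  have l: "length js = card J" using js length_vlist[of w J] by simp
  let ?v = "vlist w J"
  let ?N = "card J"
  define K where "K = nat \<lfloor>g\<rfloor>"
  have KK: "real K \<le> g" "g < real K + 1" using assms(3) unfolding K_def by linarith+
  define z where "z = (if K < ?N then ?v ! K else 0)"
  define y where "y = (\<lambda>j. max 0 (w j - z))"
  have z0: "0 \<le> z" unfolding z_def using vlist_nonneg[OF assms(1,2)] by auto
  have trm: "max 0 (?v ! k - z) = (?v ! k - z) * clampw g k" if k: "k < ?N" for k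
  proof (cases "k < K")
    case True
    then have c1: "clampw g k = 1" using KK by (auto simp: clampw_def)
    have "z \<le> ?v ! k" unfolding z_def using True k vlist_mono[of k K J w] vlist_nonneg[OF assms(1,2) k] by auto
    then show ?thesis using c1 by simp
  next
    case False
    show ?thesis
    proof (cases "k = K")
      case True
      then show ?thesis using k unfolding z_def by simp
    next
      case False2: False
      then have "K < k" using False by simp
      then have c0: "clampw g k = 0" using KK by (auto simp: clampw_def)
      have "?v ! k \<le> z" unfolding z_def using \<open>K < k\<close> k vlist_mono[of K k J w] by auto
      then show ?thesis using c0 by simp
    qed
  qed
  have "(\<Sum>j\<in>J. y j) = (\<Sum>k<length js. y (js ! k))" by (rule sum_J_nth[OF js(1,2)])
  also have "\<dots> = (\<Sum>k<?N. max 0 (?v ! k - z))" using l js(3) unfolding y_def by (intro sum.cong) auto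
  also have "\<dots> = (\<Sum>k<?N. (?v ! k - z) * clampw g k)" by (rule sum.cong) (auto simp: trm)
  finally have sy: "(\<Sum>j\<in>J. y j) = (\<Sum>k<?N. (?v ! k - z) * clampw g k)" .
  have sg: "g = (\<Sum>k<?N. clampw g k)" using clampw_sum[OF assms(3), of ?N] assms(4) by simp
  have "(\<Sum>j\<in>J. y j) + g * z = (\<Sum>k<?N. (?v ! k - z) * clampw g k) + (\<Sum>k<?N. clampw g k) * z"
    using sy sg by simp
  also have "\<dots> = Qf w J g" unfolding Qf_def
    by (simp add: sum_distrib_right sum_distrib_left sum_subtractf algebra_simps)
  finally have "(\<Sum>j\<in>J. y j) + g * z \<le> Qf w J g" by simp
  moreover have "\<forall>j\<in>J. 0 \<le> y j \<and> w j \<le> y j + z" unfolding y_def by auto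
  ultimately show ?thesis using z0 by blast
qed

lemma lowerA:
  assumes "finite J" "0 \<le> g" "0 \<le> z" "\<forall>j\<in>J. 0 \<le> y j \<and> w j \<le> y j + z"
  shows "Qf w J g \<le> (\<Sum>j\<in>J. y j) + g * z"
proof -
  obtain phi where ph: "\<forall>j\<in>J. 0 \<le> phi j \<and> phi j \<le> 1" "(\<Sum>j\<in>J. phi j) \<le> g"
     "(\<Sum>j\<in>J. w j * phi j) = Qf w J g" using dual_exists[OF assms(1,2), of w] by blast
  have "Qf w J g = (\<Sum>j\<in>J. w j * phi j)" using ph by simp
  also have "\<dots> \<le> (\<Sum>j\<in>J. y j * phi j + z * phi j)"
    by (rule sum_mono) (use ph assms in \<open>auto simp: distrib_right[symmetric] intro!: mult_right_mono\<close>)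
  also have "\<dots> = (\<Sum>j\<in>J. y j * phi j) + z * (\<Sum>j\<in>J. phi j)" by (simp add: sum.distrib sum_distrib_left)
  also have "\<dots> \<le> (\<Sum>j\<in>J. y j) + z * g"
  proof (rule add_mono)
    show "(\<Sum>j\<in>J. y j * phi j) \<le> (\<Sum>j\<in>J. y j)"
      by (rule sum_mono) (use ph assms in \<open>auto intro: mult_left_le\<close>)
    show "z * (\<Sum>j\<in>J. phi j) \<le> z * g" using ph assms by (intro mult_left_mono) auto
  qed
  finally show ?thesis by (simp add: mult.commute)
qed

lemma upperB:
  assumes "finite J" "\<forall>j\<in>J. w j \<ge> 0" "0 \<le> g" "g \<le> real (card J)" "0 \<le> p"
    "\<forall>j\<in>J. 0 \<le> phi j \<and> phi j \<le> p" "(\<Sum>j\<in>J. phi j) \<le> g * p"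
  shows "(\<Sum>j\<in>J. w j * phi j) \<le> p * Qf w J g"
proof -
  obtain y z where yz: "0 \<le> z" "\<forall>j\<in>J. 0 \<le> y j \<and> w j \<le> y j + z"
     "(\<Sum>j\<in>J. y j) + g * z \<le> Qf w J g" using primal_exists[OF assms(1-4)] by blast
  have "(\<Sum>j\<in>J. w j * phi j) \<le> (\<Sum>j\<in>J. y j * phi j + z * phi j)"
    by (rule sum_mono) (use yz assms in \<open>auto simp: distrib_right[symmetric] intro!: mult_right_mono\<close>)
  also have "\<dots> = (\<Sum>j\<in>J. y j * phi j) + z * (\<Sum>j\<in>J. phi j)" by (simp add: sum.distrib sum_distrib_left)
  also have "\<dots> \<le> p * (\<Sum>j\<in>J. y j) + z * (g * p)"
  proof (rule add_mono)
    show "(\<Sum>j\<in>J. y j * phi j) \<le> p * (\<Sum>j\<in>J. y j)"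
      unfolding sum_distrib_left
      by (rule sum_mono) (use yz assms in \<open>auto simp: mult.commute intro!: mult_right_mono\<close>)
    show "z * (\<Sum>j\<in>J. phi j) \<le> z * (g * p)" using yz assms by (intro mult_left_mono) auto
  qed
  also have "\<dots> = p * ((\<Sum>j\<in>J. y j) + g * z)" by (simp add: algebra_simps)
  also have "\<dots> \<le> p * Qf w J g" using yz assms by (intro mult_left_mono) auto
  finally show ?thesis .
qed

lemma csum:
  fixes a :: "nat \<Rightarrow> nat \<Rightarrow> real"
  assumes Js_sub: "\<forall>i\<in>{1..m}. Js i \<subseteq> {1..n}"
    and C: "\<forall>j\<in>{1..n}. (\<Sum>i\<in>{1..m}. a i j * p i)
          + (\<Sum>i\<in>{i\<in>{1..m}. j \<in> Js i}. al i j * (lam i j - mu i j)) = c j"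
  shows "(\<Sum>j\<in>{1..n}. c j * xh j) = (\<Sum>i\<in>{1..m}. p i * (\<Sum>j\<in>{1..n}. a i j * xh j))
           + (\<Sum>i\<in>{1..m}. \<Sum>j\<in>Js i. al i j * xh j * (lam i j - mu i j))"
proof -
  have "(\<Sum>j\<in>{1..n}. c j * xh j) = (\<Sum>j\<in>{1..n}. (\<Sum>i\<in>{1..m}. a i j * p i * xh j)
          + (\<Sum>i\<in>{i\<in>{1..m}. j \<in> Js i}. al i j * xh j * (lam i j - mu i j)))"
  proof (rule sum.cong)
    fix j assume j: "j \<in> {1..n}"
    have "c j * xh j = ((\<Sum>i\<in>{1..m}. a i j * p i)
          + (\<Sum>i\<in>{i\<in>{1..m}. j \<in> Js i}. al i j * (lam i j - mu i j))) * xh j" using C j by simp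
    also have "\<dots> = (\<Sum>i\<in>{1..m}. a i j * p i * xh j)
          + (\<Sum>i\<in>{i\<in>{1..m}. j \<in> Js i}. al i j * xh j * (lam i j - mu i j))"
      by (simp only: distrib_right sum_distrib_right) (simp add: algebra_simps)
    finally show "c j * xh j = (\<Sum>i\<in>{1..m}. a i j * p i * xh j)
          + (\<Sum>i\<in>{i\<in>{1..m}. j \<in> Js i}. al i j * xh j * (lam i j - mu i j))" .
  qed simp
  also have "\<dots> = (\<Sum>j\<in>{1..n}. \<Sum>i\<in>{1..m}. a i j * p i * xh j)
          + (\<Sum>j\<in>{1..n}. \<Sum>i\<in>{i\<in>{1..m}. j \<in> Js i}. al i j * xh j * (lam i j - mu i j))"
    by (simp add: sum.distrib)
  also have "(\<Sum>j\<in>{1..n}. \<Sum>i\<in>{1..m}. a i j * p i * xh j) = (\<Sum>i\<in>{1..m}. p i * (\<Sum>j\<in>{1..n}. a i j * xh j))"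
    by (subst sum.swap) (simp add: sum_distrib_left algebra_simps)
  also have "(\<Sum>j\<in>{1..n}. \<Sum>i\<in>{i\<in>{1..m}. j \<in> Js i}. al i j * xh j * (lam i j - mu i j))
      = (\<Sum>i\<in>{1..m}. \<Sum>j\<in>{j\<in>{1..n}. j \<in> Js i}. al i j * xh j * (lam i j - mu i j))"
    by (rule sum.swap_restrict[symmetric]) auto
  also have "\<dots> = (\<Sum>i\<in>{1..m}. \<Sum>j\<in>Js i. al i j * xh j * (lam i j - mu i j))"
  proof (rule sum.cong)
    fix i assume "i \<in> {1..m}"
    then have "Js i \<subseteq> {1..n}" using Js_sub by blast
    then have "{j\<in>{1..n}. j \<in> Js i} = Js i" by blast
    then show "(\<Sum>j\<in>{j\<in>{1..n}. j \<in> Js i}. al i j * xh j * (lam i j - mu i j)) = (\<Sum>j\<in>Js i. al i j * xh j * (lam i j - mu i j))" by simp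
  qed simp
  finally show ?thesis .
qed


theorem lemma3:
  fixes m n :: nat and a :: "nat \<Rightarrow> nat \<Rightarrow> real" and b :: "nat \<Rightarrow> real"
    and Js :: "nat \<Rightarrow> nat set" and al :: "nat \<Rightarrow> nat \<Rightarrow> real" and xh :: "nat \<Rightarrow> real"
  assumes Js_sub: "\<forall>i\<in>{1..m}. Js i \<subseteq> {1..n}"
    and al_nonneg: "\<forall>i\<in>{1..m}. \<forall>j\<in>Js i. al i j \<ge> 0"
    and unique: "\<forall>i\<in>Ihat m n a b Js al xh. \<forall>g. 0 \<le> g \<and> g \<le> real (card (Js i)) \<and>
                    slack n a b xh i = Pval (al i) (Js i) g xh \<longrightarrow> g = Gamma_low n a b Js al xh i"
  shows "(\<forall>G c u y z p phi lam mu. feasible m n a b Js al xh G c u y z p phi lam mu \<longrightarrow>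
            in_Theta m n a b Js al xh G \<and>
            (\<exists>i\<in>Ihat m n a b Js al xh. G i = Gamma_low n a b Js al xh i))
       \<and> ((\<forall>i\<in>{1..m}. (\<Sum>j\<in>{1..n}. a i j * xh j) \<ge> b i) \<longrightarrow>
           (\<forall>G. in_Theta m n a b Js al xh G \<and>
                 (\<exists>i\<in>Ihat m n a b Js al xh. G i = Gamma_low n a b Js al xh i) \<longrightarrow>
                 (\<exists>c u y z p phi lam mu. feasible m n a b Js al xh G c u y z p phi lam mu)))"
proof -
  let ?s = "slack n a b xh"
  let ?IH = "Ihat m n a b Js al xh"
  let ?GL = "Gamma_low n a b Js al xh"
  define W where "W = (\<lambda>i j. al i j * \<bar>xh j\<bar>)"
  have fin: "finite (Js i)" if "i \<in> {1..m}" for i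
    using Js_sub that finite_subset[of "Js i" "{1..n}"] by auto
  have Wnn: "\<forall>j\<in>Js i. W i j \<ge> 0" if "i \<in> {1..m}" for i
    using al_nonneg that unfolding W_def by auto
  have PQ: "Pval (al i) (Js i) g xh = Qf (W i) (Js i) g"
    if "i \<in> {1..m}" "0 \<le> g" "g \<le> real (card (Js i))" for i g
    unfolding W_def by (rule Pval_Qf[OF fin[OF that(1)] that(2,3)])
  have IHm: "i \<in> {1..m}" if "i \<in> ?IH" for i using that unfolding Ihat_def by auto
  have root: "Qf (W i) (Js i) (?GL i) = ?s i \<and> 0 \<le> ?GL i \<and> ?GL i \<le> real (card (Js i))"
    if iI: "i \<in> ?IH" for i
  proof -
    have im: "i \<in> {1..m}" using IHm[OF iI] .
    have s0: "0 \<le> ?s i" and s1: "?s i \<le> (\<Sum>j\<in>Js i. W i j)" using iI unfolding Ihat_def W_def by auto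
    have "\<exists>r. 0 \<le> r \<and> r \<le> real (card (Js i)) \<and> Qf (W i) (Js i) r = ?s i"
      by (rule IVT') (use s0 s1 Qf_0 Qf_N[OF fin[OF im]] Qf_cont in auto)
    then obtain r where r: "0 \<le> r" "r \<le> real (card (Js i))" "Qf (W i) (Js i) r = ?s i" by blast
    have "r = ?GL i" using unique iI r PQ[OF im r(1,2)] by auto
    then show ?thesis using r by simp
  qed
  have below: "g \<le> ?GL i"
    if iI: "i \<in> ?IH" and g: "0 \<le> g" "g \<le> real (card (Js i))" "Qf (W i) (Js i) g \<le> ?s i" for i g
  proof (rule ccontr)
    assume "\<not> g \<le> ?GL i"
    then have "?GL i \<le> g" by simp
    have im: "i \<in> {1..m}" using IHm[OF iI] .
    have "Qf (W i) (Js i) (?GL i) \<le> Qf (W i) (Js i) g"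
      by (rule Qf_mono[OF fin[OF im] Wnn[OF im] \<open>?GL i \<le> g\<close>])
    then have "Qf (W i) (Js i) g = ?s i" using root[OF iI] g by simp
    then have "g = ?GL i" using unique iI g PQ[OF im g(1,2)] by auto
    then show False using \<open>\<not> g \<le> ?GL i\<close> by simp
  qed
  have part1: "\<forall>G c u y z p phi lam mu. feasible m n a b Js al xh G c u y z p phi lam mu \<longrightarrow>
            in_Theta m n a b Js al xh G \<and> (\<exists>i\<in>?IH. G i = ?GL i)"
  proof (intro allI impI)
    fix G c u y z p phi lam mu
    assume F: "feasible m n a b Js al xh G c u y z p phi lam mu"
    note F' = F[unfolded feasible_def]
    have Gb: "0 \<le> G i" "G i \<le> real (card (Js i))" if "i \<in> {1..m}" for i using F' that by auto
    have low: "Qf (W i) (Js i) (G i) \<le> ?s i" if im: "i \<in> {1..m}" for i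
    proof -
      have "\<forall>j\<in>Js i. 0 \<le> y i j \<and> W i j \<le> y i j + z i"
      proof
        fix j assume j: "j \<in> Js i"
        have "al i j * xh j + u i j \<ge> 0" "- al i j * xh j + u i j \<ge> 0" "y i j + z i \<ge> u i j" "y i j \<ge> 0"
          using F' im j by auto
        moreover have "W i j = \<bar>al i j * xh j\<bar>" using al_nonneg im j unfolding W_def by (simp add: abs_mult)
        ultimately show "0 \<le> y i j \<and> W i j \<le> y i j + z i" by linarith
      qed
      then have "Qf (W i) (Js i) (G i) \<le> (\<Sum>j\<in>Js i. y i j) + G i * z i"
        using lowerA[OF fin[OF im] Gb(1)[OF im]] F' im by auto
      also have "\<dots> \<le> ?s i"
      proof -
        have "b i \<le> (\<Sum>j\<in>{1..n}. a i j * xh j) - (\<Sum>j\<in>Js i. y i j) - G i * z i" using F' im by blast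
        then show ?thesis unfolding slack_def by linarith
      qed
      finally show ?thesis .
    qed
    have up: "(\<Sum>j\<in>Js i. W i j * phi i j) \<le> p i * Qf (W i) (Js i) (G i)" if im: "i \<in> {1..m}" for i
    proof (rule upperB[OF fin[OF im] Wnn[OF im] Gb[OF im]])
      show "0 \<le> p i" using F' im by blast
      show "\<forall>j\<in>Js i. 0 \<le> phi i j \<and> phi i j \<le> p i" using F' im by blast
      show "(\<Sum>j\<in>Js i. phi i j) \<le> G i * p i" using F' im by blast
    qed
    have eq: "(\<Sum>j\<in>{1..n}. c j * xh j) = (\<Sum>i\<in>{1..m}. p i * (\<Sum>j\<in>{1..n}. a i j * xh j))
           + (\<Sum>i\<in>{1..m}. \<Sum>j\<in>Js i. al i j * xh j * (lam i j - mu i j))"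
      by (rule csum[OF Js_sub]) (use F' in auto)
    have bnd: "- (\<Sum>i\<in>{1..m}. \<Sum>j\<in>Js i. al i j * xh j * (lam i j - mu i j))
         \<le> (\<Sum>i\<in>{1..m}. \<Sum>j\<in>Js i. W i j * phi i j)"
      unfolding sum_negf[symmetric]
    proof (intro sum_mono)
      fix i j assume im: "i \<in> {1..m}" and j: "j \<in> Js i"
      have "al i j \<ge> 0" "lam i j \<ge> 0" "mu i j \<ge> 0" "phi i j = lam i j + mu i j"
        using F' al_nonneg im j by auto
      then show "- (al i j * xh j * (lam i j - mu i j)) \<le> W i j * phi i j"
        unfolding W_def
        by (cases "xh j \<ge> 0") (auto simp: algebra_simps abs_of_nonneg abs_of_neg intro!: mult_left_mono mult_right_mono
               mult_nonneg_nonneg, (smt (verit) mult_nonneg_nonneg mult_nonpos_nonneg)+)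
    qed
    have "(\<Sum>i\<in>{1..m}. p i * ?s i) = (\<Sum>i\<in>{1..m}. p i * (\<Sum>j\<in>{1..n}. a i j * xh j)) - (\<Sum>i\<in>{1..m}. b i * p i)"
      unfolding slack_def by (simp add: algebra_simps sum_subtractf)
    also have "\<dots> = - (\<Sum>i\<in>{1..m}. \<Sum>j\<in>Js i. al i j * xh j * (lam i j - mu i j))"
      using eq F' by linarith
    also have "\<dots> \<le> (\<Sum>i\<in>{1..m}. p i * Qf (W i) (Js i) (G i))"
    proof -
      have "(\<Sum>i\<in>{1..m}. \<Sum>j\<in>Js i. W i j * phi i j) \<le> (\<Sum>i\<in>{1..m}. p i * Qf (W i) (Js i) (G i))"
        by (rule sum_mono) (rule up)
      then show ?thesis using bnd by linarith
    qed
    finally have "(\<Sum>i\<in>{1..m}. p i * (?s i - Qf (W i) (Js i) (G i))) \<le> 0"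
      by (simp add: algebra_simps sum_subtractf)
    moreover have nn: "\<forall>i\<in>{1..m}. 0 \<le> p i * (?s i - Qf (W i) (Js i) (G i))"
      using low F' by auto
    ultimately have z: "\<forall>i\<in>{1..m}. p i * (?s i - Qf (W i) (Js i) (G i)) = 0"
      using sum_nonneg_eq_0_iff[of "{1..m}"] by (metis (no_types, lifting) antisym finite_atLeastAtMost sum_nonneg)
    obtain i where im: "i \<in> {1..m}" and pi: "p i > 0"
    proof (rule ccontr)
      assume "\<not> thesis"
      then have "\<forall>i\<in>{1..m}. p i \<le> 0" using that by force
      then have "(\<Sum>i\<in>{1..m}. p i) \<le> 0" by (intro sum_nonpos) auto
      then show False using F' by simp
    qed
    have "p i * (?s i - Qf (W i) (Js i) (G i)) = 0" using z im by blast
    then have si: "?s i = Qf (W i) (Js i) (G i)" using pi by simp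
    have "0 \<le> Qf (W i) (Js i) (G i)"
      using Qf_mono[OF fin[OF im] Wnn[OF im] Gb(1)[OF im]] Qf_0 by simp
    moreover have "Qf (W i) (Js i) (G i) \<le> (\<Sum>j\<in>Js i. W i j)"
      using Qf_mono[OF fin[OF im] Wnn[OF im] Gb(2)[OF im]] Qf_N[OF fin[OF im]] by simp
    ultimately have iI: "i \<in> ?IH" using si im unfolding Ihat_def W_def by auto
    have "G i = ?GL i" using unique iI Gb[OF im] si PQ[OF im Gb[OF im]] by auto
    moreover have "in_Theta m n a b Js al xh G"
      unfolding in_Theta_def using Gb below low IHm by blast
    ultimately show "in_Theta m n a b Js al xh G \<and> (\<exists>i\<in>?IH. G i = ?GL i)" using iI by blast
  qed
  have part2: "(\<forall>i\<in>{1..m}. (\<Sum>j\<in>{1..n}. a i j * xh j) \<ge> b i) \<longrightarrow>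
           (\<forall>G. in_Theta m n a b Js al xh G \<and> (\<exists>i\<in>?IH. G i = ?GL i) \<longrightarrow>
                 (\<exists>c u y z p phi lam mu. feasible m n a b Js al xh G c u y z p phi lam mu))"
  proof (intro impI allI)
    fix G assume H: "\<forall>i\<in>{1..m}. (\<Sum>j\<in>{1..n}. a i j * xh j) \<ge> b i"
      and T: "in_Theta m n a b Js al xh G \<and> (\<exists>i\<in>?IH. G i = ?GL i)"
    obtain ih where ihI: "ih \<in> ?IH" and Gih: "G ih = ?GL ih" using T by blast
    have ihm: "ih \<in> {1..m}" using IHm[OF ihI] .
    have Gb: "0 \<le> G i" "G i \<le> real (card (Js i))" if "i \<in> {1..m}" for i
      using T that unfolding in_Theta_def by auto
    have QS: "Qf (W i) (Js i) (G i) \<le> ?s i" if im: "i \<in> {1..m}" for i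
    proof (cases "i \<in> ?IH")
      case True
      have "G i \<le> ?GL i" using T im True unfolding in_Theta_def by auto
      then show ?thesis using Qf_mono[OF fin[OF im] Wnn[OF im]] root[OF True] by metis
    next
      case False
      have "0 \<le> ?s i" using H im unfolding slack_def by auto
      then have "(\<Sum>j\<in>Js i. W i j) < ?s i" using False im unfolding Ihat_def W_def by auto
      moreover have "Qf (W i) (Js i) (G i) \<le> (\<Sum>j\<in>Js i. W i j)"
        using Qf_mono[OF fin[OF im] Wnn[OF im] Gb(2)[OF im]] Qf_N[OF fin[OF im]] by simp
      ultimately show ?thesis by simp
    qed
    have "\<forall>i\<in>{1..m}. \<exists>yz. 0 \<le> snd yz \<and> (\<forall>j\<in>Js i. 0 \<le> fst yz j \<and> W i j \<le> fst yz j + snd yz)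
              \<and> (\<Sum>j\<in>Js i. fst yz j) + G i * snd yz \<le> Qf (W i) (Js i) (G i)"
      using primal_exists[OF fin Wnn Gb] by fastforce
    then obtain YZ where YZ: "\<forall>i\<in>{1..m}. 0 \<le> snd (YZ i) \<and> (\<forall>j\<in>Js i. 0 \<le> fst (YZ i) j \<and> W i j \<le> fst (YZ i) j + snd (YZ i))
              \<and> (\<Sum>j\<in>Js i. fst (YZ i) j) + G i * snd (YZ i) \<le> Qf (W i) (Js i) (G i)"
      by metis
    obtain D where D: "\<forall>j\<in>Js ih. 0 \<le> D j \<and> D j \<le> 1" "(\<Sum>j\<in>Js ih. D j) \<le> G ih"
        "(\<Sum>j\<in>Js ih. W ih j * D j) = Qf (W ih) (Js ih) (G ih)"
      using dual_exists[OF fin[OF ihm] Gb(1)[OF ihm]] by blast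
    have sih: "Qf (W ih) (Js ih) (G ih) = ?s ih" using root[OF ihI] Gih by simp
    define y where "y = (\<lambda>i. fst (YZ i))"
    define z where "z = (\<lambda>i. snd (YZ i))"
    define u where "u = W"
    define p where "p = (\<lambda>i. if i = ih then (1::real) else 0)"
    define phi where "phi = (\<lambda>i j. if i = ih then D j else 0)"
    define lam where "lam = (\<lambda>i j. if xh j < 0 then phi i j else 0)"
    define mu where "mu = (\<lambda>i j. if xh j < 0 then 0 else phi i j)"
    define c where "c = (\<lambda>j. (\<Sum>i\<in>{1..m}. a i j * p i)
          + (\<Sum>i\<in>{i\<in>{1..m}. j \<in> Js i}. al i j * (lam i j - mu i j)))"
    have lm: "al i j * xh j * (lam i j - mu i j) = - (W i j * phi i j)" for i j
      unfolding lam_def mu_def W_def by (cases "xh j < 0") (simp_all add: abs_of_neg abs_of_nonneg)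
    have eq: "(\<Sum>j\<in>{1..n}. c j * xh j) = (\<Sum>i\<in>{1..m}. p i * (\<Sum>j\<in>{1..n}. a i j * xh j))
           + (\<Sum>i\<in>{1..m}. \<Sum>j\<in>Js i. al i j * xh j * (lam i j - mu i j))"
      by (rule csum[OF Js_sub]) (simp add: c_def)
    have e1: "(\<Sum>i\<in>{1..m}. p i * (\<Sum>j\<in>{1..n}. a i j * xh j)) = (\<Sum>j\<in>{1..n}. a ih j * xh j)"
    proof -
      have "(\<Sum>i\<in>{1..m}. p i * (\<Sum>j\<in>{1..n}. a i j * xh j)) = (\<Sum>i\<in>{1..m}. if i = ih then (\<Sum>j\<in>{1..n}. a i j * xh j) else 0)"
        by (rule sum.cong) (auto simp: p_def)
      then show ?thesis using ihm by (simp add: sum.delta)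
    qed
    have e2: "(\<Sum>i\<in>{1..m}. \<Sum>j\<in>Js i. al i j * xh j * (lam i j - mu i j)) = - ?s ih"
    proof -
      have "(\<Sum>i\<in>{1..m}. \<Sum>j\<in>Js i. al i j * xh j * (lam i j - mu i j))
          = (\<Sum>i\<in>{1..m}. if i = ih then - (\<Sum>j\<in>Js ih. W ih j * D j) else 0)"
        unfolding lm phi_def by (intro sum.cong) (auto simp: sum_negf)
      also have "\<dots> = - ?s ih" using ihm D(3) sih by (simp add: sum.delta)
      finally show ?thesis .
    qed
    have e3: "(\<Sum>i\<in>{1..m}. b i * p i) = b ih"
    proof -
      have "(\<Sum>i\<in>{1..m}. b i * p i) = (\<Sum>i\<in>{1..m}. if i = ih then b i else 0)"
        by (rule sum.cong) (auto simp: p_def)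
      then show ?thesis using ihm by (simp add: sum.delta)
    qed
    have "feasible m n a b Js al xh G c u y z p phi lam mu"
      unfolding feasible_def
    proof (intro conjI)
      show "(\<Sum>j\<in>{1..n}. c j * xh j) - (\<Sum>i\<in>{1..m}. b i * p i) = 0"
        using eq e1 e2 e3 unfolding slack_def by simp
      show "\<forall>i\<in>{1..m}. \<forall>j\<in>Js i. al i j * xh j + u i j \<ge> 0 \<and> - al i j * xh j + u i j \<ge> 0"
      proof (intro ballI conjI)
        fix i j assume "i \<in> {1..m}" "j \<in> Js i"
        then have "al i j \<ge> 0" using al_nonneg by blast
        then have e: "u i j = \<bar>al i j * xh j\<bar>" unfolding u_def W_def by (simp add: abs_mult)
        show "al i j * xh j + u i j \<ge> 0" unfolding e by linarith
        show "- al i j * xh j + u i j \<ge> 0" unfolding e by linarith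
      qed
      show "\<forall>i\<in>{1..m}. \<forall>j\<in>Js i. y i j + z i \<ge> u i j"
        using YZ unfolding y_def z_def u_def by auto
      show "\<forall>i\<in>{1..m}. (\<Sum>j\<in>{1..n}. a i j * xh j) - (\<Sum>j\<in>Js i. y i j) - G i * z i \<ge> b i"
      proof
        fix i assume im: "i \<in> {1..m}"
        have "(\<Sum>j\<in>Js i. y i j) + G i * z i \<le> ?s i" using YZ QS[OF im] im unfolding y_def z_def by fastforce
        then show "(\<Sum>j\<in>{1..n}. a i j * xh j) - (\<Sum>j\<in>Js i. y i j) - G i * z i \<ge> b i"
          unfolding slack_def by simp
      qed
      show "\<forall>i\<in>{1..m}. \<forall>j\<in>Js i. y i j \<ge> 0" using YZ unfolding y_def by auto
      show "\<forall>i\<in>{1..m}. z i \<ge> 0" using YZ unfolding z_def by auto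
      show "\<forall>i\<in>{1..m}. 0 \<le> G i \<and> G i \<le> real (card (Js i))" using Gb by auto
      show "(\<Sum>i\<in>{1..m}. p i) = 1" unfolding p_def using ihm by simp
      show "\<forall>j\<in>{1..n}. (\<Sum>i\<in>{1..m}. a i j * p i)
          + (\<Sum>i\<in>{i\<in>{1..m}. j \<in> Js i}. al i j * (lam i j - mu i j)) = c j"
        unfolding c_def by simp
      show "\<forall>i\<in>{1..m}. \<forall>j\<in>Js i. phi i j \<le> p i \<and> phi i j = lam i j + mu i j"
        unfolding phi_def p_def lam_def mu_def using D(1) by auto
      show "\<forall>i\<in>{1..m}. (\<Sum>j\<in>Js i. phi i j) \<le> G i * p i"
        unfolding phi_def p_def using D(2) by auto
      show "\<forall>i\<in>{1..m}. p i \<ge> 0" unfolding p_def by auto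
      show "\<forall>i\<in>{1..m}. \<forall>j\<in>Js i. phi i j \<ge> 0 \<and> lam i j \<ge> 0 \<and> mu i j \<ge> 0"
        unfolding phi_def lam_def mu_def using D(1) by auto
    qed
    then show "\<exists>c u y z p phi lam mu. feasible m n a b Js al xh G c u y z p phi lam mu" by blast
  qed
  show ?thesis using part1 part2 by blast
qed

end
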